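(* Let $\mu>0$ and $d\in(0,1)$. For integers $N,L\ge1$ let $M=N+L$ and let $(\tau_1,\dots,\tau_M)\in\{0,1\}^M$ be uniformly distributed among configurations with $\sum_i\tau_i=N$ (the stationary distribution of TASEP on a ring of $M$ sites with $N$ particles), with $\tau_{M+1}=\tau_1$. Define $\phi=\frac{\mu}{M}\sum_{i=1}^M\tau_i(1-\tau_{i+1})$. Then as $N,L\to\infty$ with $N/(N+L)\to d$, $$L\cdot\mathrm{Var}(\phi)\longrightarrow \mu^2\,d^2(1-d)^3,$$ i.e. $\mathrm{Var}(\phi)=\frac{1-d}{L}\,d^2(1-d)^2\mu^2+o(1/L)$. *)

theory Defs
  imports "HOL-Probability.Probability"
begin

text \<open>TASEP configurations on a ring of M = N + L sites (indexed 0..M-1) with exactly N particles.\<close>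
definition tasep_configs :: "nat \<Rightarrow> nat \<Rightarrow> bool list set" where
  "tasep_configs N L = {xs. length xs = N + L \<and> count_list xs True = N}"

definition tasep_stationary :: "nat \<Rightarrow> nat \<Rightarrow> bool list pmf" where
  "tasep_stationary N L = pmf_of_set (tasep_configs N L)"

definition tasep_phi :: "real \<Rightarrow> nat \<Rightarrow> nat \<Rightarrow> bool list \<Rightarrow> real" where
  "tasep_phi \<mu> N L xs =
     (let M = N + L in
      \<mu> / real M * (\<Sum>i<M. (if xs ! i then 1 else 0) * (1 - (if xs ! ((i + 1) mod M) then 1 else 0))))"

end

theory Submission
  imports Defs
begin

lemma count_true_card: "count_list xs True = card {i. i < length xs \<and> xs ! i}"
  by (simp add: count_list_eq_length_filter length_filter_conv_card)

lemma count_PQ: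
  assumes P: "P \<subseteq> {..<M}" and Q: "Q \<subseteq> {..<M}" and PQ: "P \<inter> Q = {}" and cP: "card P \<le> N"
  shows "card {xs. length xs = M \<and> count_list xs True = N \<and> (\<forall>i\<in>P. xs!i) \<and> (\<forall>i\<in>Q. \<not> xs!i)}
         = (M - card P - card Q) choose (N - card P)"
proof -
  let ?A = "{xs. length xs = M \<and> count_list xs True = N \<and> (\<forall>i\<in>P. xs!i) \<and> (\<forall>i\<in>Q. \<not> xs!i)}"
  let ?D = "{..<M} - P - Q"
  let ?B = "{B. B \<subseteq> ?D \<and> card B = N - card P}"
  define f where "f xs = {i. i < M \<and> xs!i} - P" for xs :: "bool list"
  define g where "g B = map (\<lambda>i. i \<in> B \<union> P) [0..<M]" for B
  have finP: "finite P" using P finite_subset by blast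
  have finQ: "finite Q" using Q finite_subset by blast
  have "bij_betw f ?A ?B"
  proof (rule bij_betw_byWitness[where f'=g])
    show "\<forall>a\<in>?A. g (f a) = a"
      by (auto simp: g_def f_def list_eq_iff_nth_eq)
    show "\<forall>a'\<in>?B. f (g a') = a'"
      by (auto simp: g_def f_def)
    show "f ` ?A \<subseteq> ?B"
    proof
      fix B assume "B \<in> f ` ?A"
      then obtain xs where xs: "xs \<in> ?A" and B: "B = f xs" by blast
      have "{i. i < M \<and> xs!i} = B \<union> P" using xs P by (auto simp: B f_def)
      moreover have "card {i. i < M \<and> xs!i} = N" using xs by (clarsimp simp: count_true_card)
      moreover have "B \<inter> P = {}" by (auto simp: B f_def)
      moreover have "finite B" by (auto simp: B f_def)
      ultimately have "card B = N - card P" using finP by (simp add: card_Un_disjoint)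
      moreover have "B \<subseteq> ?D" using xs by (auto simp: B f_def)
      ultimately show "B \<in> ?B" by simp
    qed
    show "g ` ?B \<subseteq> ?A"
    proof
      fix xs assume "xs \<in> g ` ?B"
      then obtain B where B: "B \<in> ?B" and xs: "xs = g B" by blast
      have "{i. i < length xs \<and> xs!i} = B \<union> P" using B P by (auto simp: xs g_def)
      moreover have "B \<inter> P = {}" using B by auto
      moreover have "finite B" using B finite_subset by blast
      ultimately have "count_list xs True = N" using B cP finP by (simp add: count_true_card card_Un_disjoint)
      moreover have "\<forall>i\<in>P. xs!i" using P by (auto simp: xs g_def)
      moreover have "\<forall>i\<in>Q. \<not> xs!i" using Q B PQ by (force simp: xs g_def)
      ultimately show "xs \<in> ?A" by (simp add: xs g_def)
    qed
  qed
  then have "card ?A = card ?B" by (rule bij_betw_same_card)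
  also have "\<dots> = card ?D choose (N - card P)" by (rule n_subsets) simp
  also have "card ?D = M - card P - card Q"
  proof -
    have "?D = ({..<M} - P) - Q" by blast
    then have "card ?D = card ({..<M} - P) - card Q" using Q PQ finQ
      by (metis Diff_Int_distrib2 Diff_empty Int_absorb1 card_Diff_subset_Int finite_lessThan finite_Diff)
    also have "card ({..<M} - P) = M - card P" using P finP by (simp add: card_Diff_subset)
    finally show ?thesis .
  qed
  finally show ?thesis .
qed


lemma sum_ind_card: "finite C \<Longrightarrow> (\<Sum>x\<in>C. if P x then 1 else 0 :: real) = real (card {x\<in>C. P x})"
  by (simp add: sum.If_cases Collect_conj_eq Int_commute)

lemma var_pmf_of_set:
  assumes "finite C" "C \<noteq> {}"
  shows "measure_pmf.variance (pmf_of_set C) f = (\<Sum>x\<in>C. (f x)^2)/card C - ((\<Sum>x\<in>C. f x)/card C)^2"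
proof -
  define m where "m = (\<Sum>x\<in>C. f x)/card C"
  have c: "real (card C) > 0" using assms by (simp add: card_gt_0_iff)
  have E: "measure_pmf.expectation (pmf_of_set C) f = m" using assms by (simp add: integral_pmf_of_set m_def)
  have "(\<Sum>x\<in>C. (f x - m)^2) = (\<Sum>x\<in>C. (f x)^2) - (\<Sum>x\<in>C. 2*m*f x) + (\<Sum>x\<in>C. m^2)"
    by (simp add: power2_diff sum.distrib sum_subtractf mult_ac)
  also have "(\<Sum>x\<in>C. 2*m*f x) = 2*m*(\<Sum>x\<in>C. f x)" by (simp add: sum_distrib_left sum_distrib_right mult.assoc)
  also have "(\<Sum>x\<in>C. m^2) = card C * m^2" by simp
  also have "(\<Sum>x\<in>C. f x) = card C * m" using c by (simp add: m_def)
  finally have "(\<Sum>x\<in>C. (f x - m)^2) = (\<Sum>x\<in>C. (f x)^2) - card C * m^2" by (simp add: power2_eq_square)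
  then show ?thesis using assms c E by (simp add: integral_pmf_of_set m_def[symmetric] field_simps)
qed

lemma sum_j:
  assumes M: "M \<ge> 3" and i: "i < M"
  shows "(\<Sum>j<M. (if j = i then a else if j = (i+1) mod M \<or> (j+1) mod M = i then 0 else b)) = a + (real M - 3) * (b::real)"
proof -
  define p where "p = (if i = 0 then M - 1 else i - 1)"
  define s where "s = (if i + 1 = M then 0 else i + 1)"
  have s: "(i+1) mod M = s" using i by (auto simp: s_def)
  have ps: "((j+1) mod M = i) = (j = p)" if "j < M" for j
  proof -
    have "(j+1) mod M = (if j + 1 = M then 0 else j + 1)" using that by auto
    then show ?thesis using that i M by (auto simp: p_def)
  qed
  have dist: "i \<noteq> s" "i \<noteq> p" "s \<noteq> p" using M i by (auto simp: s_def p_def)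
  have sub: "{i,s,p} \<subseteq> {..<M}" using M i by (auto simp: s_def p_def)
  have "(\<Sum>j<M. (if j = i then a else if j = (i+1) mod M \<or> (j+1) mod M = i then 0 else b))
      = (\<Sum>j<M. (if j = i then a else 0) + (if j \<in> {..<M} - {i,s,p} then b else 0))"
    by (rule sum.cong) (use s ps dist in auto)
  also have "\<dots> = a + b * real (card ({..<M} - {i,s,p}))"
  proof -
    have "(\<Sum>j<M. (if j = i then a else 0)) = a" using i by simp
    moreover have "(\<Sum>j<M. (if j \<in> {..<M} - {i,s,p} then b else 0)) = (\<Sum>j\<in>{..<M} - {i,s,p}. b)"
      by (rule sum.mono_neutral_cong_right) auto
    ultimately show ?thesis by (simp add: sum.distrib)
  qed
  also have "card ({..<M} - {i,s,p}) = M - 3" using sub dist by (simp add: card_Diff_subset)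
  finally show ?thesis using M by (simp add: of_nat_diff)
qed

lemma cnt:
  assumes "P \<subseteq> {..<N+L}" "Q \<subseteq> {..<N+L}" "P \<inter> Q = {}" "card P \<le> N"
  shows "card {xs\<in>tasep_configs N L. (\<forall>i\<in>P. xs!i) \<and> (\<forall>i\<in>Q. \<not> xs!i)} = (N + L - card P - card Q) choose (N - card P)"
  using count_PQ[OF assms] unfolding tasep_configs_def by (simp add: conj_assoc)


lemma mod_suc_ne: "(i::nat) < M \<Longrightarrow> M \<ge> 2 \<Longrightarrow> (i+1) mod M \<noteq> i"
proof -
  assume a: "i < M" "M \<ge> 2"
  have "(i+1) mod M = (if i + 1 = M then 0 else i+1)" using a by auto
  then show ?thesis using a by auto
qed

lemma mod_suc_inj: "(i::nat) < M \<Longrightarrow> j < M \<Longrightarrow> (i+1) mod M = (j+1) mod M \<Longrightarrow> i = j"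
proof -
  assume a: "i < M" "j < M" "(i+1) mod M = (j+1) mod M"
  have "(i+1) mod M = (if i + 1 = M then 0 else i+1)" "(j+1) mod M = (if j + 1 = M then 0 else j+1)"
    using a by auto
  then show ?thesis using a by (auto split: if_splits)
qed

lemma sums_formula:
  assumes N: "N \<ge> 2" and L: "L \<ge> 2"
  defines "M \<equiv> N + L"
  defines "C \<equiv> tasep_configs N L"
  defines "J \<equiv> (\<lambda>xs. (\<Sum>i<M. if xs!i \<and> \<not> xs!((i+1) mod M) then 1 else 0 :: real))"
  shows "(\<Sum>xs\<in>C. J xs) = real M * real ((M-2) choose (N-1))"
    and "(\<Sum>xs\<in>C. (J xs)^2) = real M * (real ((M-2) choose (N-1)) + (real M - 3) * real ((M-4) choose (N-2)))"
    and "card C = M choose N" and "finite C" and "C \<noteq> {}"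
proof -
  define s where "s i = (i+1) mod M" for i
  define X where "X i xs = (xs!i \<and> \<not> xs!(s i))" for i xs
  define A where "A = (M-2) choose (N-1)"
  define B where "B = (M-4) choose (N-2)"
  have M: "M \<ge> 4" using N L by (simp add: M_def)
  have sM: "s i < M" for i using M by (simp add: s_def)
  show cC: "card C = M choose N"
    using cnt[of "{}" N L "{}"] by (simp add: C_def M_def)
  moreover have "M choose N > 0" using N L by (simp add: M_def)
  ultimately show fC: "finite C" and neC: "C \<noteq> {}" by (auto intro: card_ge_0_finite)
  have c1: "card {xs\<in>C. X i xs} = A" if i: "i < M" for i
  proof -
    have "card {xs\<in>C. (\<forall>k\<in>{i}. xs!k) \<and> (\<forall>k\<in>{s i}. \<not> xs!k)} = A"
      unfolding C_def A_def
      by (subst cnt) (use i sM mod_suc_ne[OF i] M N in \<open>auto simp: M_def s_def numeral_2_eq_2\<close>)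
    then show ?thesis by (simp add: X_def)
  qed
  have c2: "card {xs\<in>C. X i xs \<and> X j xs} = (if j = i then A else if j = s i \<or> s j = i then 0 else B)"
    if i: "i < M" and j: "j < M" for i j
  proof (cases "j = i")
    case True then show ?thesis using c1[OF i] by simp
  next
    case ji: False
    show ?thesis
    proof (cases "j = s i \<or> s j = i")
      case True
      then have e: "{xs\<in>C. X i xs \<and> X j xs} = {}" by (auto simp: X_def)
      show ?thesis using True ji by (subst e) simp
    next
      case False
      have d1: "s i \<noteq> s j" using mod_suc_inj[OF i j] ji by (auto simp: s_def)
      have d2: "i \<noteq> s i" "j \<noteq> s j" using mod_suc_ne[OF i] mod_suc_ne[OF j] M by (auto simp: s_def)
      have "card {xs\<in>C. (\<forall>k\<in>{i,j}. xs!k) \<and> (\<forall>k\<in>{s i, s j}. \<not> xs!k)} = B"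
        unfolding C_def B_def
        by (subst cnt) (use i j sM M N ji False d1 d2 in \<open>auto simp: M_def numeral_eq_Suc\<close>)
      moreover have "{xs\<in>C. (\<forall>k\<in>{i,j}. xs!k) \<and> (\<forall>k\<in>{s i, s j}. \<not> xs!k)} = {xs\<in>C. X i xs \<and> X j xs}"
        by (auto simp: X_def)
      ultimately show ?thesis using ji False by simp
    qed
  qed
  have Jx: "J xs = (\<Sum>i<M. if X i xs then 1 else 0)" for xs by (simp add: J_def X_def s_def)
  have "(\<Sum>xs\<in>C. J xs) = (\<Sum>i<M. \<Sum>xs\<in>C. if X i xs then 1 else 0)"
    unfolding Jx by (rule sum.swap)
  also have "\<dots> = (\<Sum>i<M. real A)"
    by (rule sum.cong) (simp_all add: sum_ind_card[OF fC] c1)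
  finally show "(\<Sum>xs\<in>C. J xs) = real M * real ((M-2) choose (N-1))" by (simp add: A_def)
  have "(\<Sum>xs\<in>C. (J xs)^2) = (\<Sum>xs\<in>C. \<Sum>i<M. \<Sum>j<M. if X i xs \<and> X j xs then 1 else 0)"
    unfolding Jx power2_eq_square sum_product by (rule sum.cong) (auto intro!: sum.cong)
  also have "\<dots> = (\<Sum>i<M. \<Sum>j<M. \<Sum>xs\<in>C. if X i xs \<and> X j xs then 1 else 0)"
    by (simp add: sum.swap[of _ C] )
  also have "\<dots> = (\<Sum>i<M. \<Sum>j<M. (if j = i then real A else if j = s i \<or> s j = i then 0 else real B))"
    by (rule sum.cong, simp, rule sum.cong) (simp_all add: sum_ind_card[OF fC] c2)
  also have "\<dots> = (\<Sum>i<M. real A + (real M - 3) * real B)"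
  proof (rule sum.cong)
    fix i assume i: "i \<in> {..<M}"
    show "(\<Sum>j<M. (if j = i then real A else if j = s i \<or> s j = i then 0 else real B)) = real A + (real M - 3) * real B"
      unfolding s_def by (rule sum_j) (use M i in auto)
  qed simp
  finally show "(\<Sum>xs\<in>C. (J xs)^2) = real M * (real ((M-2) choose (N-1)) + (real M - 3) * real ((M-4) choose (N-2)))"
    by (simp add: A_def B_def)
qed

lemma ratA_nat: "(n+2)*(l+2) * ((n+l+4) choose (n+2)) = (n+l+4)*(n+l+3) * ((n+l+2) choose (n+1))"
proof -
  have 1: "(n+2) * ((n+l+4) choose (n+2)) = (n+l+4) * ((n+l+3) choose (n+1))"
    using Suc_times_binomial[of "n+1" "n+l+3"] by (simp add: numeral_eq_Suc)
  have 2: "(l+2) * ((n+l+3) choose (n+1)) = (n+l+3) * ((n+l+2) choose (n+1))"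
    using binomial_absorb_comp[of "n+l+3" "n+1"] by (simp add: numeral_eq_Suc)
  have "(n+2)*(l+2) * ((n+l+4) choose (n+2)) = (l+2)*((n+2) * ((n+l+4) choose (n+2)))" by (simp only: mult_ac)
  also have "\<dots> = (n+l+4) * ((l+2) * ((n+l+3) choose (n+1)))" by (simp only: 1 mult_ac)
  also have "\<dots> = (n+l+4)*(n+l+3) * ((n+l+2) choose (n+1))" by (simp only: 2 mult_ac)
  finally show ?thesis .
qed
lemma ratB_nat: "(n+1)*(l+1) * ((n+l+2) choose (n+1)) = (n+l+2)*(n+l+1) * ((n+l) choose n)"
proof -
  have 1: "(n+1) * ((n+l+2) choose (n+1)) = (n+l+2) * ((n+l+1) choose n)"
    using Suc_times_binomial[of "n" "n+l+1"] by (simp add: numeral_eq_Suc)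
  have 2: "(l+1) * ((n+l+1) choose n) = (n+l+1) * ((n+l) choose n)"
    using binomial_absorb_comp[of "n+l+1" "n"] by (simp add: numeral_eq_Suc)
  have "(n+1)*(l+1) * ((n+l+2) choose (n+1)) = (l+1)*((n+1) * ((n+l+2) choose (n+1)))" by (simp only: mult_ac)
  also have "\<dots> = (n+l+2) * ((l+1) * ((n+l+1) choose n))" by (simp only: 1 mult_ac)
  also have "\<dots> = (n+l+2)*(n+l+1) * ((n+l) choose n)" by (simp only: 2 mult_ac)
  finally show ?thesis .
qed
lemma alg0:
  fixes N L x1 x2 :: real
  assumes "x1 = N + L - 1" "x2 = N + L - 2" "x1 \<noteq> 0" "x2 \<noteq> 0"
  shows "N*L/x1 + N*(N-1)*L*(L-1)/(x1*x2) - (N*L/x1)^2 = N*(N-1)*L*(L-1)/(x1^2*x2)"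
proof -
  have "N*L/x1 + N*(N-1)*L*(L-1)/(x1*x2) - (N*L/x1)^2 = (N*L*x1*x2 + N*(N-1)*L*(L-1)*x1 - N^2*L^2*x2)/(x1^2*x2)"
    using assms(3,4) by (simp add: field_simps power2_eq_square)
  also have "N*L*x1*x2 + N*(N-1)*L*(L-1)*x1 - N^2*L^2*x2 = N*(N-1)*L*(L-1)"
    unfolding assms(1,2) by (simp add: algebra_simps power2_eq_square)
  finally show ?thesis .
qed

lemma alg:
  fixes N L m c A B \<mu> :: real
  assumes m: "m = N + L" and N: "N \<ge> 2" and L: "L \<ge> 2" and c: "c > 0"
    and hA: "N*L*c = m*(m-1)*A"
    and hB: "(N-1)*(L-1)*A = (m-2)*(m-3)*B"
  shows "(\<mu>/m)^2 * (m * (A + (m - 3) * B)) / c - ((\<mu>/m) * (m * A) / c)^2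
       = \<mu>^2 * (N * (N - 1) * L * (L - 1)) / (m^2 * (m - 1)^2 * (m - 2))"
proof -
  have p: "m \<noteq> 0" "m - 1 \<noteq> 0" "m - 2 \<noteq> 0" "m - 3 \<noteq> 0" using m N L by auto
  have S1: "m * A / c = N*L/(m-1)" using hA p c by (simp add: field_simps)
  have S2: "m * (A + (m - 3) * B) / c = N*L/(m-1) + N*(N-1)*L*(L-1)/((m-1)*(m-2))"
  proof -
    have "m*(m-3)*B/c = N*(N-1)*L*(L-1)/((m-1)*(m-2))"
    proof -
      have "(m-3)*B = (N-1)*(L-1)*A/(m-2)" using hB p by (simp add: field_simps)
      moreover have "\<And>d. d \<noteq> 0 \<Longrightarrow> m*((N-1)*(L-1)*A/d)/c = (N-1)*(L-1)*(m*A/c)/d"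
        using c by (simp add: field_simps)
      ultimately have "m*(m-3)*B/c = (N-1)*(L-1)*(m*A/c)/(m-2)" using p by (metis mult.assoc)
      also have "\<dots> = N*(N-1)*L*(L-1)/((m-1)*(m-2))" unfolding S1 using p by (simp add: field_simps)
      finally show ?thesis .
    qed
    then show ?thesis using S1 by (simp add: distrib_left add_divide_distrib mult.assoc)
  qed
  have "(\<mu>/m)^2 * (m * (A + (m - 3) * B)) / c - ((\<mu>/m) * (m * A) / c)^2
      = (\<mu>/m)^2 * (m * (A + (m - 3) * B) / c - (m * A / c)^2)"
    by (simp add: field_simps power2_eq_square)
  also have "\<dots> = (\<mu>/m)^2 * (N*(N-1)*L*(L-1)/((m-1)^2*(m-2)))"
    unfolding S1 S2 using alg0[of "m-1" N L "m-2"] p m by simp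
  also have "\<dots> = \<mu>^2 * (N * (N - 1) * L * (L - 1)) / (m^2 * (m - 1)^2 * (m - 2))"
    by (simp add: power_divide)
  finally show ?thesis .
qed

lemma var_formula:
  assumes N: "N \<ge> 2" and L: "L \<ge> 2"
  shows "measure_pmf.variance (tasep_stationary N L) (tasep_phi \<mu> N L)
    = \<mu>^2 * (real N * (real N - 1) * real L * (real L - 1)) / ((real (N+L))^2 * (real (N+L) - 1)^2 * (real (N+L) - 2))"
proof -
  define M where "M = N + L"
  define C where "C = tasep_configs N L"
  define J where "J = (\<lambda>xs. (\<Sum>i<M. if xs!i \<and> \<not> xs!((i+1) mod M) then 1 else 0 :: real))"
  note sf = sums_formula[OF N L, folded M_def C_def, folded J_def]
  have phi: "tasep_phi \<mu> N L = (\<lambda>xs. \<mu> / real M * J xs)"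
  proof (rule ext)
    fix xs
    have "(\<Sum>i<M. (if xs!i then 1 else 0) * (1 - (if xs!((i+1) mod M) then 1 else 0))) = J xs"
      unfolding J_def by (rule sum.cong) auto
    then show "tasep_phi \<mu> N L xs = \<mu> / real M * J xs"
      unfolding tasep_phi_def Let_def M_def by simp
  qed
  have "measure_pmf.variance (tasep_stationary N L) (tasep_phi \<mu> N L)
      = (\<Sum>xs\<in>C. (\<mu> / real M * J xs)^2)/card C - ((\<Sum>xs\<in>C. \<mu> / real M * J xs)/card C)^2"
    unfolding tasep_stationary_def C_def[symmetric] phi using sf(4,5) by (rule var_pmf_of_set)
  also have "\<dots> = (\<mu> / real M)^2 * (real M * (real ((M-2) choose (N-1)) + (real M - 3) * real ((M-4) choose (N-2)))) / real (M choose N)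
     - ((\<mu> / real M) * (real M * real ((M-2) choose (N-1))) / real (M choose N))^2"
  proof -
    have s1: "(\<Sum>xs\<in>C. \<mu> / real M * J xs) = \<mu> / real M * (\<Sum>xs\<in>C. J xs)" by (simp add: sum_distrib_left)
    have s2: "(\<Sum>xs\<in>C. (\<mu> / real M * J xs)^2) = (\<mu> / real M)^2 * (\<Sum>xs\<in>C. (J xs)^2)"
      by (simp only: power_mult_distrib sum_distrib_left)
    show ?thesis unfolding s1 s2 using sf(1,2,3) by (simp add: J_def)
  qed
  also have "\<dots> = \<mu>^2 * (real N * (real N - 1) * real L * (real L - 1)) / ((real M)^2 * (real M - 1)^2 * (real M - 2))"
  proof (rule alg)
    obtain n l where nl: "N = n + 2" "L = l + 2" using N L by (metis le_add_diff_inverse2)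
    show "real M = real N + real L" by (simp add: M_def)
    show "2 \<le> real N" "2 \<le> real L" using N L by auto
    show "0 < real (M choose N)" using N L by (simp add: M_def)
    have e: "M = n + l + 4" "M - 2 = n+l+2" "N - 1 = n + 1" "M - 4 = n + l" "N - 2 = n" using nl by (auto simp: M_def)
    show "real N * real L * real (M choose N) = real M * (real M - 1) * real (M - 2 choose N - 1)"
      using arg_cong[OF ratA_nat[of n l], of real] unfolding e nl by (simp add: algebra_simps)
    show "(real N - 1) * (real L - 1) * real (M - 2 choose N - 1) = (real M - 2) * (real M - 3) * real (M - 4 choose N - 2)"
      using arg_cong[OF ratB_nat[of n l], of real] unfolding e nl by (simp add: algebra_simps)
  qed
  finally show ?thesis by (simp add: M_def)
qed


lemma alg_limit:
  fixes N L \<mu> :: real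
  assumes N: "N \<ge> 2" and L: "L \<ge> 2"
  shows "L * (\<mu>^2 * (N * (N - 1) * L * (L - 1)) / ((N+L)^2 * ((N+L) - 1)^2 * ((N+L) - 2)))
    = \<mu>^2 * ((N/(N+L)) * ((N/(N+L) - 1/(N+L)) / (1 - 1/(N+L))) * (1 - N/(N+L))
         * ((1 - N/(N+L)) / (1 - 2 * (1/(N+L)))) * ((1 - N/(N+L) - 1/(N+L)) / (1 - 1/(N+L))))"
proof -
  define M where "M = N + L"
  have p: "M \<noteq> 0" "M - 1 \<noteq> 0" "M - 2 \<noteq> 0" using N L by (auto simp: M_def)
  have e1: "(N/M - 1/M) / (1 - 1/M) = (N-1)/(M-1)" using p by (simp add: field_simps)
  have e2: "1 - N/M = L/M" using p by (simp add: field_simps M_def)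
  have e3: "(L/M) / (1 - 2 * (1/M)) = L/(M-2)" using p by (simp add: field_simps)
  have e4: "(L/M - 1/M) / (1 - 1/M) = (L-1)/(M-1)" using p by (simp add: field_simps)
  have e4': "1 - N/M - 1/M = L/M - 1/M" using e2 by simp
  show ?thesis unfolding M_def[symmetric] e1 e4' e2 e3 e4 using p
    by (simp add: field_simps power2_eq_square)
qed

theorem mainTheorem9:
  fixes \<mu> d :: real and N L :: "nat \<Rightarrow> nat"
  assumes "\<mu> > 0" and "0 < d" and "d < 1"
    and "\<And>k. N k \<ge> 1" and "\<And>k. L k \<ge> 1"
    and "filterlim N at_top sequentially" and "filterlim L at_top sequentially"
    and "(\<lambda>k. real (N k) / real (N k + L k)) \<longlonglongrightarrow> d"
  shows "(\<lambda>k. real (L k) *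
            measure_pmf.variance (tasep_stationary (N k) (L k)) (tasep_phi \<mu> (N k) (L k)))
         \<longlonglongrightarrow> \<mu>^2 * d^2 * (1 - d)^3"
proof -
  define r where "r k = real (N k) / real (N k + L k)" for k
  define u where "u k = 1 / real (N k + L k)" for k
  have evN: "eventually (\<lambda>k. N k \<ge> 2) sequentially" using assms(6) by (simp add: filterlim_at_top)
  have evL: "eventually (\<lambda>k. L k \<ge> 2) sequentially" using assms(7) by (simp add: filterlim_at_top)
  have "filterlim (\<lambda>k. N k + L k) at_top sequentially"
    by (rule filterlim_at_top_mono[OF assms(6)]) auto
  then have "filterlim (\<lambda>k. real (N k + L k)) at_top sequentially"
    by (rule filterlim_compose[OF filterlim_real_sequentially])
  then have u0: "u \<longlonglongrightarrow> 0" unfolding u_def using tendsto_inverse_0_at_top by (simp add: inverse_eq_divide)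
  have r: "r \<longlonglongrightarrow> d" unfolding r_def by (rule assms(8))
  have "(\<lambda>k. \<mu>^2 * (r k * ((r k - u k) / (1 - u k)) * (1 - r k) * ((1 - r k) / (1 - 2 * u k)) * ((1 - r k - u k) / (1 - u k))))
     \<longlonglongrightarrow> \<mu>^2 * (d * ((d - 0) / (1 - 0)) * (1 - d) * ((1 - d) / (1 - 2 * 0)) * ((1 - d - 0) / (1 - 0)))"
    by (intro tendsto_intros r u0) auto
  also have "\<mu>^2 * (d * ((d - 0) / (1 - 0)) * (1 - d) * ((1 - d) / (1 - 2 * 0)) * ((1 - d - 0) / (1 - 0))) = \<mu>^2 * d^2 * (1 - d)^3"
    by (simp add: power2_eq_square power3_eq_cube)
  finally have lim: "(\<lambda>k. \<mu>^2 * (r k * ((r k - u k) / (1 - u k)) * (1 - r k) * ((1 - r k) / (1 - 2 * u k)) * ((1 - r k - u k) / (1 - u k))))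
     \<longlonglongrightarrow> \<mu>^2 * d^2 * (1 - d)^3" .
  show ?thesis
  proof (rule Lim_transform_eventually[OF lim])
    show "\<forall>\<^sub>F k in sequentially. \<mu>^2 * (r k * ((r k - u k) / (1 - u k)) * (1 - r k) * ((1 - r k) / (1 - 2 * u k)) * ((1 - r k - u k) / (1 - u k)))
      = real (L k) * measure_pmf.variance (tasep_stationary (N k) (L k)) (tasep_phi \<mu> (N k) (L k))"
      using evN evL
    proof eventually_elim
      case (elim k)
      have NL: "2 \<le> real (N k)" "2 \<le> real (L k)" using elim by auto
      show ?case unfolding var_formula[OF elim] r_def u_def of_nat_add alg_limit[OF NL] by (rule refl)
    qed
  qed
qed

end
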